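(* Let $L$ be an integral lattice containing no vectors of norm one (i.e. no $v$ with $v\cdot v=1$). If $v\in L$ is contained in an obtuse superbase for $L$, then $v\cdot v\le\mathrm{disc}(L)$.
   Context: An integral lattice is a finitely generated free abelian group with a symmetric positive definite integral bilinear form; $\mathrm{disc}(L)$ is the determinant of its Gram matrix. An obtuse superbase of a rank-$k$ lattice $L$ is a set $\{v_0,\dots,v_k\}\subseteq L$ spanning $L$ with $v_i\cdot v_j\le0$ for $i\ne j$ and $v_0+\dots+v_k=0$. *)

theory Defs
  imports "HOL-Analysis.Analysis"
begin

text \<open>A rank-n integral lattice L is modelled as \<int>^n (coordinates w.r.t. a basis)
  together with its Gram matrix G; the bilinear form is x . y = x^T G y.\<close>

definition lat_form :: "int^'n^'n \<Rightarrow> int^'n \<Rightarrow> int^'n \<Rightarrow> int" where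
  "lat_form G x y = (\<Sum>i\<in>UNIV. \<Sum>j\<in>UNIV. x $ i * G $ i $ j * y $ j)"

definition integral_lattice :: "int^'n^'n \<Rightarrow> bool" where
  "integral_lattice G \<longleftrightarrow> transpose G = G \<and> (\<forall>x. x \<noteq> 0 \<longrightarrow> lat_form G x x > 0)"

definition disc :: "int^'n^'n \<Rightarrow> int" where
  "disc G = det G"

text \<open>Obtuse superbase \<open>{v_0,...,v_k}\<close>, indexed by \<open>'n option\<close> (which has k+1 elements).\<close>
definition obtuse_superbase :: "int^'n^'n \<Rightarrow> ('n option \<Rightarrow> int^'n) \<Rightarrow> bool" where
  "obtuse_superbase G v \<longleftrightarrow>
     (\<forall>w. \<exists>c :: 'n option \<Rightarrow> int. w = (\<Sum>i\<in>UNIV. c i *s v i)) \<and>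
     (\<forall>i j. i \<noteq> j \<longrightarrow> lat_form G (v i) (v j) \<le> 0) \<and>
     (\<Sum>i\<in>UNIV. v i) = 0"

end

theory Submission
  imports Defs
begin

definition padded :: "'n set \<Rightarrow> int^'n^'n \<Rightarrow> bool" where
  "padded I A \<longleftrightarrow> (\<forall>i j. (i \<notin> I \<or> j \<notin> I) \<longrightarrow> A$i$j = (if i = j then 1 else 0))"

definition rs :: "'n set \<Rightarrow> int^'n^'n \<Rightarrow> 'n \<Rightarrow> int" where
  "rs I A i = (\<Sum>j\<in>I. A$i$j)"

definition dd :: "'n set \<Rightarrow> int^'n^'n \<Rightarrow> bool" where
  "dd I A \<longleftrightarrow> (\<forall>i\<in>I. \<forall>j\<in>I. i \<noteq> j \<longrightarrow> A$i$j \<le> 0) \<and> (\<forall>i\<in>I. rs I A i \<ge> 0)"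

definition delp :: "'n \<Rightarrow> int^'n^'n \<Rightarrow> int^'n^'n" where
  "delp p A = (\<chi> i j. if i = p \<or> j = p then (if i = j then 1 else 0) else A$i$j)"

definition redp :: "'n \<Rightarrow> int \<Rightarrow> int^'n^'n \<Rightarrow> int^'n^'n" where
  "redp p t A = (\<chi> i j. if i = p \<and> j = p then A$i$j - t else A$i$j)"

lemma det_rowp:
  fixes A :: "int^'n^'n"
  shows "det (\<chi> i. if i = p then axis p 1 else row i A) = det (delp p A)"
  unfolding det_def
proof (rule sum.cong[OF refl])
  fix s assume "s \<in> {s. s permutes (UNIV::'n set)}"
  then have s: "s permutes UNIV" by simp
  show "of_int (sign s) * (\<Prod>i\<in>UNIV. (\<chi> i. if i = p then axis p 1 else row i A) $ i $ s i) =
        of_int (sign s) * (\<Prod>i\<in>UNIV. delp p A $ i $ s i)"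
  proof (cases "s p = p")
    case True
    have "s i \<noteq> p" if "i \<noteq> p" for i using True that s by (metis permutes_inj injD)
    then show ?thesis using True
      by (intro arg_cong[where f="\<lambda>x. _ * x"] prod.cong) (auto simp: delp_def axis_def row_def)
  next
    case False
    have "(\<Prod>i\<in>UNIV. (\<chi> i. if i = p then axis p 1 else row i A) $ i $ s i) = 0"
      by (rule prod_zero) (use False in \<open>auto simp: axis_def intro!: bexI[of _ p]\<close>)
    moreover have "(\<Prod>i\<in>UNIV. delp p A $ i $ s i) = 0"
      by (rule prod_zero) (use False in \<open>auto simp: delp_def intro!: bexI[of _ p]\<close>)
    ultimately show ?thesis by (metis mult_zero_right)
  qed
qed

lemma det_split:
  fixes A :: "int^'n^'n"
  shows "det A = det (redp p t A) + t * det (delp p A)"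
proof -
  let ?B = "redp p t A"
  have eqA: "A = (\<chi> i. if i = p then row p ?B + t *s axis p 1 else row i ?B)"
    by (simp add: vec_eq_iff redp_def row_def axis_def)
  have eqB: "?B = (\<chi> i. if i = p then row p ?B else row i ?B)"
    by (simp add: vec_eq_iff row_def)
  have r: "(\<chi> i. if i = p then axis p 1 else row i ?B) = (\<chi> i. if i = p then axis p 1 else row i A)"
    by (simp add: vec_eq_iff redp_def row_def)
  have "det A = det (\<chi> i. if i = p then row p ?B + t *s axis p 1 else row i ?B)"
    using eqA by simp
  also have "\<dots> = det (\<chi> i. if i = p then row p ?B else row i ?B) + det (\<chi> i. if i = p then t *s axis p 1 else row i ?B)"
    by (rule det_row_add)
  also have "det (\<chi> i. if i = p then t *s axis p 1 else row i ?B) = t * det (\<chi> i. if i = p then axis p 1 else row i ?B)"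
    by (rule det_row_mul)
  finally show ?thesis using eqB r det_rowp[of p A] by simp
qed

definition rmat :: "int^'n^'n \<Rightarrow> real^'n^'n" where
  "rmat A = (\<chi> i j. real_of_int (A$i$j))"
definition rvec :: "int^'n \<Rightarrow> real^'n" where
  "rvec x = (\<chi> i. real_of_int (x$i))"

lemma det_rmat: "det (rmat A) = real_of_int (det A)"
  by (simp add: det_def rmat_def of_int_sum of_int_mult of_int_prod)

lemma rmat_mult: "rmat A *v rvec x = rvec (A *v x)"
  by (simp add: vec_eq_iff rmat_def rvec_def matrix_vector_mult_def of_int_sum)

lemma rvec_eq0: "rvec x = 0 \<longleftrightarrow> x = 0"
  by (simp add: vec_eq_iff rvec_def)

lemma rvec_zero: "rvec 0 = 0"
  by (simp add: vec_eq_iff rvec_def)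

lemma det_nz_inj:
  fixes A :: "int^'n^'n"
  assumes "det A \<noteq> 0" "A *v x = 0"
  shows "x = 0"
proof -
  have "det (rmat A) \<noteq> 0" using assms(1) by (simp add: det_rmat)
  then have "invertible (rmat A)" using invertible_det_nz by blast
  then obtain B where B: "B ** rmat A = mat 1" unfolding invertible_def by blast
  have "rvec x = B *v (rmat A *v rvec x)" by (simp add: matrix_vector_mul_assoc B)
  also have "\<dots> = 0" using assms(2) by (simp add: rmat_mult rvec_zero)
  finally show ?thesis using rvec_eq0 by blast
qed

lemma padded_empty: "padded {} A \<Longrightarrow> A = mat 1"
  by (simp add: padded_def vec_eq_iff mat_def)

lemma det_nonneg_aux:
  fixes A :: "int^'n^'n"
  shows "padded I A \<Longrightarrow> dd I A \<Longrightarrow> det A \<ge> 0"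
proof (induction "card I" arbitrary: I A rule: less_induct)
  case less
  note IHo = less.hyps
  show ?case using less.prems
  proof (induction "card {i\<in>I. rs I A i \<noteq> 0}" arbitrary: A rule: less_induct)
    case less
    show ?case
    proof (cases "\<exists>p\<in>I. rs I A p \<noteq> 0")
      case False
      show ?thesis
      proof (cases "I = {}")
        case True
        then have "A = mat 1" using padded_empty less.prems(1) by simp
        then show ?thesis by simp
      next
        case ne: False
        define x :: "int^'n" where "x = (\<chi> i. if i \<in> I then 1 else 0)"
        have "x \<noteq> 0" using ne by (auto simp: x_def vec_eq_iff)
        moreover have "A *v x = 0"
        proof -
          have "(A *v x) $ i = 0" for i
          proof (cases "i \<in> I")
            case True
            have "(A *v x) $ i = (\<Sum>j\<in>UNIV. if j \<in> I then A$i$j else 0)"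
              by (simp add: matrix_vector_mult_def x_def if_distrib cong: if_cong)
            also have "\<dots> = rs I A i" by (simp add: rs_def sum.If_cases)
            finally show ?thesis using False True by simp
          next
            case False
            have "(A *v x) $ i = (\<Sum>j\<in>UNIV. if j \<in> I then A$i$j else 0)"
              by (simp add: matrix_vector_mult_def x_def if_distrib cong: if_cong)
            also have "\<dots> = (\<Sum>j\<in>I. A$i$j)" by (simp add: sum.If_cases)
            also have "\<dots> = 0" using less.prems(1) False by (auto simp: padded_def intro!: sum.neutral)
            finally show ?thesis .
          qed
          then show ?thesis by (simp add: vec_eq_iff)
        qed
        ultimately have "det A = 0" using det_nz_inj by blast
        then show ?thesis by simp
      qed
    next
      case True
      then obtain p where p: "p \<in> I" "rs I A p \<noteq> 0" by blast
      define t where "t = rs I A p"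
      have tpos: "t > 0" using p less.prems(2) unfolding dd_def t_def by force
      have pB: "padded I (redp p t A)" using less.prems(1) p(1)
        by (auto simp: padded_def redp_def)
      have rsB: "rs I (redp p t A) i = (if i = p then 0 else rs I A i)" if "i \<in> I" for i
        using p(1) by (auto simp: rs_def redp_def t_def sum.remove if_distrib cong: if_cong)
      have dB: "dd I (redp p t A)" using less.prems(2) rsB
        by (auto simp: dd_def redp_def)
      have cnt: "card {i\<in>I. rs I (redp p t A) i \<noteq> 0} < card {i\<in>I. rs I A i \<noteq> 0}"
      proof -
        have eqS: "{i\<in>I. rs I (redp p t A) i \<noteq> 0} = {i\<in>I. rs I A i \<noteq> 0} - {p}"
        proof (rule set_eqI)
          fix i show "i \<in> {i\<in>I. rs I (redp p t A) i \<noteq> 0} \<longleftrightarrow> i \<in> {i\<in>I. rs I A i \<noteq> 0} - {p}"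
            by (cases "i \<in> I"; cases "i = p") (simp_all add: rsB)
        qed
        have pin: "p \<in> {i\<in>I. rs I A i \<noteq> 0}" using p by simp
        show ?thesis unfolding eqS by (rule card_Diff1_less[OF finite pin])
      qed
      have d1: "det (redp p t A) \<ge> 0" by (rule less.hyps[OF cnt pB dB])
      have pA': "padded (I - {p}) (delp p A)" using less.prems(1)
        by (auto simp: padded_def delp_def)
      have rsA': "rs (I - {p}) (delp p A) i = rs I A i - A$i$p" if "i \<in> I" "i \<noteq> p" for i
        using p(1) that by (simp add: rs_def delp_def sum.remove)
      have dA': "dd (I - {p}) (delp p A)"
        using less.prems(2) p(1) rsA' unfolding dd_def
        by (auto simp: delp_def) (smt (verit))
      have d2: "det (delp p A) \<ge> 0"
        by (rule IHo[OF card_Diff1_less[OF finite p(1)] pA' dA'])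
      show ?thesis using det_split[of A p t] d1 d2 tpos by simp
    qed
  qed
qed


definition ind :: "'n set \<Rightarrow> int^'n" where
  "ind J = (\<chi> i. if i \<in> J then 1 else 0)"

lemma lat_form_ind: "lat_form A (ind J) (ind J) = (\<Sum>i\<in>J. \<Sum>j\<in>J. A$i$j)"
proof -
  have "lat_form A (ind J) (ind J) = (\<Sum>i\<in>UNIV. if i \<in> J then (\<Sum>j\<in>UNIV. if j \<in> J then A$i$j else 0) else 0)"
    unfolding lat_form_def ind_def by (intro sum.cong refl) (auto intro!: sum.cong)
  also have "\<dots> = (\<Sum>i\<in>J. \<Sum>j\<in>J. A$i$j)"
    by (simp add: sum.If_cases)
  finally show ?thesis .
qed

lemma ind_nz: "J \<noteq> {} \<Longrightarrow> ind J \<noteq> 0"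
  by (auto simp: ind_def vec_eq_iff)

lemma lat_form_axis: "lat_form A (axis p 1) (axis p 1) = A$p$p"
proof -
  have "axis p 1 = ind {p}" by (simp add: vec_eq_iff axis_def ind_def)
  then show ?thesis by (simp add: lat_form_ind)
qed

lemma lat_form_delp: "x$p = 0 \<Longrightarrow> lat_form (delp p A) x x = lat_form A x x"
  unfolding lat_form_def delp_def by (auto intro!: sum.cong)

lemma redp_padded: "padded I A \<Longrightarrow> p \<in> I \<Longrightarrow> padded I (redp p t A)"
  by (auto simp: padded_def redp_def)

lemma redp_rs: "p \<in> I \<Longrightarrow> i \<in> I \<Longrightarrow> rs I (redp p t A) i = (if i = p then rs I A i - t else rs I A i)"
  by (auto simp: rs_def redp_def sum.remove if_distrib cong: if_cong)

lemma redp_dd: "p \<in> I \<Longrightarrow> dd I A \<Longrightarrow> t = rs I A p \<Longrightarrow> dd I (redp p t A)"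
  using redp_rs[of p I _ t A] by (auto simp: dd_def redp_def)

lemma delp_padded: "padded I A \<Longrightarrow> padded (I - {p}) (delp p A)"
  by (auto simp: padded_def delp_def)

lemma delp_rs: "p \<in> I \<Longrightarrow> i \<in> I \<Longrightarrow> i \<noteq> p \<Longrightarrow> rs (I - {p}) (delp p A) i = rs I A i - A$i$p"
  by (simp add: rs_def delp_def sum.remove)

lemma delp_dd: "p \<in> I \<Longrightarrow> dd I A \<Longrightarrow> dd (I - {p}) (delp p A)"
  using delp_rs[of p I _ A] unfolding dd_def
  by (auto simp: delp_def) (smt (verit))

lemma det_ge_aux:
  fixes A :: "int^'n^'n"
  shows "padded I A \<Longrightarrow> dd I A \<Longrightarrow> transpose A = A \<Longrightarrow>
    (\<forall>x. x \<noteq> 0 \<longrightarrow> (\<forall>i. i \<notin> I \<longrightarrow> x$i = 0) \<longrightarrow> lat_form A x x \<ge> 2) \<Longrightarrow>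
    det A \<ge> (\<Sum>i\<in>I. rs I A i)"
proof (induction "card I" arbitrary: I A rule: less_induct)
  case less
  show ?case
  proof (cases "I = {}")
    case True
    then have "A = mat 1" using padded_empty less.prems(1) by simp
    then show ?thesis using True by simp
  next
    case ne: False
    have aI: "(\<Sum>i\<in>I. rs I A i) = lat_form A (ind I) (ind I)"
      by (simp add: lat_form_ind rs_def)
    have "lat_form A (ind I) (ind I) \<ge> 2"
      using less.prems(4) ind_nz[OF ne] by (auto simp: ind_def)
    then have "\<exists>p\<in>I. rs I A p > 0"
      using aI by (metis (no_types, lifting) not_less sum_nonpos order.trans not_numeral_le_zero)
    then obtain p where p: "p \<in> I" "rs I A p > 0" by blast
    define t where "t = rs I A p"
    have split: "det A = det (redp p t A) + t * det (delp p A)" by (rule det_split)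
    have d1: "det (redp p t A) \<ge> 0"
      by (rule det_nonneg_aux[OF redp_padded[OF less.prems(1) p(1)] redp_dd[OF p(1) less.prems(2) t_def]])
    show ?thesis
    proof (cases "I - {p} = {}")
      case True
      have "padded {} (delp p A)" using delp_padded[OF less.prems(1), of p] True by simp
      then have "delp p A = mat 1" by (rule padded_empty)
      moreover have "I = {p}" using True p(1) by auto
      ultimately show ?thesis using split d1 t_def by simp
    next
      case ne2: False
      let ?J = "I - {p}"
      let ?A = "delp p A"
      have IH: "det ?A \<ge> (\<Sum>i\<in>?J. rs ?J ?A i)"
      proof (rule less.hyps)
        show "card ?J < card I" by (rule card_Diff1_less[OF finite p(1)])
        show "padded ?J ?A" by (rule delp_padded[OF less.prems(1)])
        show "dd ?J ?A" by (rule delp_dd[OF p(1) less.prems(2)])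
        show "transpose ?A = ?A" using less.prems(3)
          by (simp add: vec_eq_iff transpose_def delp_def)
        show "\<forall>x. x \<noteq> 0 \<longrightarrow> (\<forall>i. i \<notin> ?J \<longrightarrow> x$i = 0) \<longrightarrow> lat_form ?A x x \<ge> 2"
        proof (intro allI impI)
          fix x :: "int^'n" assume x: "x \<noteq> 0" "\<forall>i. i \<notin> ?J \<longrightarrow> x$i = 0"
          then have "x$p = 0" by auto
          then have "lat_form ?A x x = lat_form A x x" by (rule lat_form_delp)
          moreover have "lat_form A x x \<ge> 2" using less.prems(4) x by auto
          ultimately show "lat_form ?A x x \<ge> 2" by simp
        qed
      qed
      have a'eq: "(\<Sum>i\<in>?J. rs ?J ?A i) = (\<Sum>i\<in>?J. \<Sum>j\<in>?J. A$i$j)"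
        by (auto simp: rs_def delp_def intro!: sum.cong)
      have a'2: "(\<Sum>i\<in>?J. \<Sum>j\<in>?J. A$i$j) \<ge> 2"
      proof -
        have s1: "\<forall>i. i \<notin> I \<longrightarrow> ind ?J $ i = 0" by (simp add: ind_def)
        have "lat_form A (ind ?J) (ind ?J) \<ge> 2"
          using less.prems(4) ind_nz[OF ne2] s1 by blast
        then show ?thesis by (simp only: lat_form_ind)
      qed
      have App: "A$p$p \<ge> 2"
      proof -
        have s1: "\<forall>i. i \<notin> I \<longrightarrow> axis p (1::int) $ i = 0" using p(1) by (auto simp: axis_def)
        have s2: "axis p (1::int) \<noteq> 0" by (simp add: axis_eq_0_iff)
        have "lat_form A (axis p 1) (axis p 1) \<ge> 2"
          using less.prems(4) s1 s2 by blast
        then show ?thesis by (simp only: lat_form_axis)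
      qed
      have sym: "A$i$j = A$j$i" for i j
      proof -
        have "transpose A $ j $ i = A $ j $ i" using less.prems(3) by simp
        then show ?thesis by (simp add: transpose_def)
      qed
      have rowp: "t = A$p$p + (\<Sum>j\<in>?J. A$p$j)"
        unfolding t_def rs_def using p(1) by (simp add: sum.remove)
      have rows: "(\<Sum>i\<in>I. rs I A i) = t + (\<Sum>i\<in>?J. A$i$p) + (\<Sum>i\<in>?J. \<Sum>j\<in>?J. A$i$j)"
      proof -
        have "(\<Sum>i\<in>I. rs I A i) = t + (\<Sum>i\<in>?J. rs I A i)"
          unfolding t_def using p(1) by (simp add: sum.remove)
        also have "(\<Sum>i\<in>?J. rs I A i) = (\<Sum>i\<in>?J. A$i$p + (\<Sum>j\<in>?J. A$i$j))"
          unfolding rs_def using p(1) by (intro sum.cong refl) (simp add: sum.remove)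
        finally show ?thesis by (simp add: sum.distrib)
      qed
      have colp: "(\<Sum>i\<in>?J. A$i$p) = (\<Sum>j\<in>?J. A$p$j)" using sym by simp
      define a' where "a' = (\<Sum>i\<in>?J. \<Sum>j\<in>?J. A$i$j)"
      have "(t - 1) * (a' - 2) \<ge> 0" using p(2) a'2 t_def a'_def by simp
      then have "t * a' \<ge> a' + 2 * t - 2" by (simp add: algebra_simps)
      moreover have "det A \<ge> t * a'"
        using split d1 IH a'eq a'_def p(2) t_def by (smt (verit) mult_left_mono)
      ultimately show ?thesis using rows colp rowp App a'_def by linarith
    qed
  qed
qed



lemma lat_form_alt: "lat_form G x y = (\<Sum>i\<in>UNIV. x$i * (G *v y)$i)"
  by (simp add: lat_form_def matrix_vector_mult_def sum_distrib_left mult.assoc)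

lemma sum_mv: fixes P :: "int^'c^'r" shows "(\<Sum>i\<in>UNIV. (P *v x)$i * w$i) = (\<Sum>c\<in>UNIV. x$c * (transpose P *v w)$c)"
proof -
  have "(\<Sum>i\<in>UNIV. (P *v x)$i * w$i) = (\<Sum>i\<in>UNIV. \<Sum>c\<in>UNIV. P$i$c * x$c * w$i)"
    by (simp add: matrix_vector_mult_def sum_distrib_right)
  also have "\<dots> = (\<Sum>c\<in>UNIV. \<Sum>i\<in>UNIV. P$i$c * x$c * w$i)" by (rule sum.swap)
  also have "\<dots> = (\<Sum>c\<in>UNIV. x$c * (transpose P *v w)$c)"
    unfolding matrix_vector_mult_def transpose_def
    by (intro sum.cong refl) (simp add: sum_distrib_left, rule sum.cong, simp_all add: mult_ac)
  finally show ?thesis .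
qed

lemma lat_form_mat: "lat_form G (P *v x) (P *v y) = lat_form (transpose P ** G ** P) x y"
proof -
  have "lat_form G (P *v x) (P *v y) = (\<Sum>i\<in>UNIV. (P *v x)$i * (G *v (P *v y))$i)"
    by (rule lat_form_alt)
  also have "\<dots> = (\<Sum>c\<in>UNIV. x$c * (transpose P *v (G *v (P *v y)))$c)" by (rule sum_mv)
  also have "transpose P *v (G *v (P *v y)) = (transpose P ** G ** P) *v y"
    by (simp add: matrix_vector_mul_assoc matrix_mul_assoc)
  finally show ?thesis by (simp add: lat_form_alt)
qed

lemma sum_axis_r: "(\<Sum>j\<in>UNIV. f j * axis l (1::int) $ j) = f l"
proof -
  have "\<And>j. f j * axis l (1::int) $ j = (if j = l then f j else 0)" by (simp add: axis_def)
  then show ?thesis by simp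
qed

lemma sum_axis_l: "(\<Sum>j\<in>UNIV. axis l (1::int) $ j * f j) = f l"
  using sum_axis_r[of f l] by (simp add: mult.commute)

lemma lat_form_axis2: "lat_form A (axis k 1) (axis l 1) = A$k$l"
  by (simp add: lat_form_alt matrix_vector_mult_def sum_axis_r sum_axis_l)

lemma lat_form_sum_right: "lat_form G x (sum f S) = (\<Sum>s\<in>S. lat_form G x (f s))"
  by (simp add: lat_form_alt matrix_vector_mult_def sum_distrib_left sum_distrib_right mult_ac sum.swap[of _ S] )

lemma lat_form_sum_left: "lat_form G (sum f S) y = (\<Sum>s\<in>S. lat_form G (f s) y)"
  by (simp add: lat_form_alt sum_distrib_right sum.swap[of _ S] )

lemma lat_form_neg_right: "lat_form G x (- y) = - lat_form G x y"
  by (simp add: lat_form_def sum_negf)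

lemma lat_form_neg_left: "lat_form G (- x) y = - lat_form G x y"
  by (simp add: lat_form_def sum_negf)


theorem lemma2p10:
  fixes G :: "int^'n^'n" and v :: "'n option \<Rightarrow> int^'n" and i :: "'n option"
  assumes "integral_lattice G"
    and "\<forall>x. lat_form G x x \<noteq> 1"
    and "obtuse_superbase G v"
  shows "lat_form G (v i) (v i) \<le> disc G"
proof -
  have Gsym: "transpose G = G" and Gpos: "\<And>x. x \<noteq> 0 \<Longrightarrow> lat_form G x x > 0"
    using assms(1) unfolding integral_lattice_def by auto
  have span: "\<forall>w. \<exists>c :: 'n option \<Rightarrow> int. w = (\<Sum>j\<in>UNIV. c j *s v j)"
    and obt: "\<And>j l. j \<noteq> l \<Longrightarrow> lat_form G (v j) (v l) \<le> 0"
    and sum0: "(\<Sum>j\<in>UNIV. v j) = 0"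
    using assms(3) unfolding obtuse_superbase_def by auto
  define \<sigma> :: "'n \<Rightarrow> 'n option" where "\<sigma> k = (if i = Some k then None else Some k)" for k
  have inj\<sigma>: "inj \<sigma>" unfolding inj_def \<sigma>_def by auto
  have img\<sigma>: "range \<sigma> = UNIV - {i}"
  proof
    show "range \<sigma> \<subseteq> UNIV - {i}" by (auto simp: \<sigma>_def)
    show "UNIV - {i} \<subseteq> range \<sigma>"
    proof
      fix j assume j: "j \<in> UNIV - {i}"
      show "j \<in> range \<sigma>"
      proof (cases j)
        case None
        then obtain m where "i = Some m" using j by (cases i) auto
        then have "\<sigma> m = j" using None by (simp add: \<sigma>_def)
        then show ?thesis by (metis rangeI)
      next
        case (Some m)
        then have "\<sigma> m = j" using j by (auto simp: \<sigma>_def)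
        then show ?thesis by (metis rangeI)
      qed
    qed
  qed
  have bij\<sigma>: "bij_betw \<sigma> UNIV (UNIV - {i})" using inj\<sigma> img\<sigma> by (simp add: bij_betw_def)
  have \<sigma>ne: "\<sigma> k \<noteq> i" for k using img\<sigma> by auto
  have reidx: "(\<Sum>j\<in>UNIV - {i}. f j) = (\<Sum>k\<in>UNIV. f (\<sigma> k))" for f :: "'n option \<Rightarrow> 'b::comm_monoid_add"
    using sum.reindex_bij_betw[OF bij\<sigma>, of f] by simp
  have split_sum: "(\<Sum>j\<in>UNIV. f j) = f i + (\<Sum>k\<in>UNIV. f (\<sigma> k))" for f :: "'n option \<Rightarrow> 'b::comm_monoid_add"
    by (simp add: sum.remove[of UNIV i] reidx)
  have sumv: "(\<Sum>k\<in>UNIV. v (\<sigma> k)) = - v i"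
    using sum0 split_sum[of v] by (simp add: eq_neg_iff_add_eq_0 add.commute)
  define P :: "int^'n^'n" where "P = (\<chi> r c. v (\<sigma> c) $ r)"
  have Pv: "P *v x = (\<Sum>c\<in>UNIV. x$c *s v (\<sigma> c))" for x
    by (simp add: vec_eq_iff P_def matrix_vector_mult_def mult.commute)
  have Paxis: "P *v axis k 1 = v (\<sigma> k)" for k
    by (simp add: vec_eq_iff P_def matrix_vector_mult_def sum_axis_r)
  have "\<forall>m. \<exists>c. axis m 1 = (\<Sum>j\<in>UNIV. c j *s v j)" using span by blast
  then obtain C where C: "\<And>m. axis m 1 = (\<Sum>j\<in>UNIV. C m j *s v j)"
    by (metis choice)
  define Q :: "int^'n^'n" where "Q = (\<chi> r m. C m (\<sigma> r) - C m i)"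
  have PQ1: "P *v (column m Q) = axis m 1" for m
  proof -
    have "P *v (column m Q) = (\<Sum>k\<in>UNIV. (C m (\<sigma> k) - C m i) *s v (\<sigma> k))"
      by (simp add: Pv Q_def column_def)
    also have "\<dots> = (\<Sum>k\<in>UNIV. C m (\<sigma> k) *s v (\<sigma> k)) - C m i *s (\<Sum>k\<in>UNIV. v (\<sigma> k))"
      by (simp add: vec_eq_iff algebra_simps sum_subtractf sum_distrib_left)
    also have "\<dots> = (\<Sum>j\<in>UNIV. C m j *s v j)"
      using split_sum[of "\<lambda>j. C m j *s v j"] sumv by (simp add: vec_eq_iff)
    finally show ?thesis using C by simp
  qed
  have "P ** Q = mat 1"
  proof -
    have "(P ** Q) $ r $ m = (mat 1 :: int^'n^'n) $ r $ m" for r m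
    proof -
      have "(P ** Q) $ r $ m = (P *v column m Q) $ r"
        by (simp add: matrix_matrix_mult_def matrix_vector_mult_def column_def)
      then show ?thesis using PQ1[of m] by (simp add: axis_def mat_def)
    qed
    then show ?thesis by (simp add: vec_eq_iff)
  qed
  then have "det P * det Q = 1" using det_mul[of P Q] by simp
  then have "det P = 1 \<or> det P = -1" by (metis zmult_eq_1_iff)
  then have detP: "det P * det P = 1" by auto
  have detPnz: "det P \<noteq> 0" using detP by auto
  define M where "M = transpose P ** G ** P"
  have Mform: "lat_form M x y = lat_form G (P *v x) (P *v y)" for x y
    by (simp add: M_def lat_form_mat)
  have Mentry: "M$k$l = lat_form G (v (\<sigma> k)) (v (\<sigma> l))" for k l
    using Mform[of "axis k 1" "axis l 1"] by (simp add: lat_form_axis2 Paxis)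
  have rsM: "rs UNIV M k = - lat_form G (v (\<sigma> k)) (v i)" for k
  proof -
    have "rs UNIV M k = lat_form G (v (\<sigma> k)) (\<Sum>l\<in>UNIV. v (\<sigma> l))"
      by (simp add: rs_def Mentry lat_form_sum_right)
    then show ?thesis by (simp add: sumv lat_form_neg_right)
  qed
  have pad: "padded UNIV M" by (simp add: padded_def)
  have ddM: "dd UNIV M"
    unfolding dd_def
  proof (intro conjI ballI impI)
    fix k l :: 'n assume "k \<noteq> l"
    then have "\<sigma> k \<noteq> \<sigma> l" using inj\<sigma> by (meson injD)
    then show "M$k$l \<le> 0" using obt by (simp add: Mentry)
  next
    fix k :: 'n
    show "rs UNIV M k \<ge> 0" using obt[OF \<sigma>ne[of k]] by (simp add: rsM)
  qed
  have Msym: "transpose M = M"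
    unfolding M_def matrix_transpose_mul transpose_transpose Gsym by (rule matrix_mul_assoc)
  have Pinj: "P *v x = 0 \<Longrightarrow> x = 0" for x
    using det_nz_inj[OF detPnz] by blast
  have Mpos: "\<forall>x. x \<noteq> 0 \<longrightarrow> (\<forall>j. j \<notin> UNIV \<longrightarrow> x$j = 0) \<longrightarrow> lat_form M x x \<ge> 2"
  proof (intro allI impI)
    fix x :: "int^'n" assume "x \<noteq> 0"
    then have "P *v x \<noteq> 0" using Pinj by blast
    then have "lat_form G (P *v x) (P *v x) > 0" "lat_form G (P *v x) (P *v x) \<noteq> 1"
      using Gpos assms(2) by auto
    then show "lat_form M x x \<ge> 2" by (simp add: Mform)
  qed
  have "det M \<ge> (\<Sum>k\<in>UNIV. rs UNIV M k)"
    by (rule det_ge_aux[OF pad ddM Msym Mpos])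
  also have "(\<Sum>k\<in>UNIV. rs UNIV M k) = lat_form G (v i) (v i)"
  proof -
    have "(\<Sum>k\<in>UNIV. rs UNIV M k) = - lat_form G (\<Sum>k\<in>UNIV. v (\<sigma> k)) (v i)"
      by (simp add: rsM lat_form_sum_left sum_negf)
    then show ?thesis by (simp add: sumv lat_form_neg_left)
  qed
  also have "det M = det G"
  proof -
    have "det M = det P * det G * det P" by (simp add: M_def det_mul)
    also have "\<dots> = (det P * det P) * det G" by (simp add: algebra_simps)
    also have "\<dots> = det G" using detP by simp
    finally show ?thesis .
  qed
  finally show ?thesis by (simp add: disc_def)
qed

end
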